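(* Let $A$ be an $\mathbb{F}_p$-algebra, $d_i\in\mathbb{N}\cup\{\infty\}$, $I=\{\alpha\in\mathbb{N}^n\mid\alpha_i<p^{d_i}\ \forall i\}$, and let $\{x^{[\alpha]}\mid\alpha\in I\}$ be an iterative multi-sequence of rank $n$ in $A$. Then for each $i$ the sequence $\{x_i^{[j]}:=x^{[je_i]}\mid 0\le j<p^{d_i}\}$ is an iterative sequence of rank $1$, these sequences pairwise commute and have the common initial element $x^{[0]}$, and $x^{[\alpha]}=x_1^{[\alpha_1]}\cdots x_n^{[\alpha_n]}$ for all $\alpha\in I$ (i.e. the multi-sequence is their product). Conversely, the product $\{x_1^{[\alpha_1]}\cdots x_n^{[\alpha_n]}\mid\alpha\in I\}$ of any $n$ pairwise commuting iterative sequences $\{x_i^{[j]}\mid0\le j<p^{d_i}\}$ of rank $1$ with a common initial element $x_1^{[0]}=\cdots=x_n^{[0]}$ is an iterative multi-sequence of rank $n$.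
   Context: A family $\{y^{[\alpha]}\mid\alpha\in I\}$ in $A$ is an iterative multi-sequence (of rank $n$) if $y^{[\alpha]}y^{[\beta]}=\binom{\alpha+\beta}{\beta}y^{[\alpha+\beta]}$ for all $\alpha,\beta\in I$, where $\binom{\alpha+\beta}{\beta}=\prod_i\binom{\alpha_i+\beta_i}{\beta_i}$ is taken in $\mathbb{F}_p$ (and the right side is $0$ when $\alpha+\beta\notin I$, where this coefficient vanishes). An iterative sequence of rank 1 is the case $n=1$. Sequences commute if all their elements pairwise commute. $e_i$ is the $i$-th standard basis vector of $\mathbb{Z}^n$. *)

theory Defs
  imports Main "HOL-Library.Extended_Nat" "HOL-Computational_Algebra.Primes"
begin

definition below :: "nat \<Rightarrow> enat \<Rightarrow> nat \<Rightarrow> bool" where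
  "below p d k \<longleftrightarrow> (case d of \<infinity> \<Rightarrow> True | enat e \<Rightarrow> k < p ^ e)"

text \<open>The index set I of multi-indices in N^n (coordinates 0..n-1; functions vanishing from n on).\<close>
definition Idx :: "nat \<Rightarrow> nat \<Rightarrow> (nat \<Rightarrow> enat) \<Rightarrow> (nat \<Rightarrow> nat) set" where
  "Idx p n d = {\<alpha>. (\<forall>i<n. below p (d i) (\<alpha> i)) \<and> (\<forall>i\<ge>n. \<alpha> i = 0)}"

definition iter_multi :: "nat \<Rightarrow> nat \<Rightarrow> (nat \<Rightarrow> enat) \<Rightarrow> ((nat \<Rightarrow> nat) \<Rightarrow> 'a::ring_1) \<Rightarrow> bool" where
  "iter_multi p n d y \<longleftrightarrow>
     (\<forall>\<alpha>\<in>Idx p n d. \<forall>\<beta>\<in>Idx p n d.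
        y \<alpha> * y \<beta> = of_nat (\<Prod>i<n. (\<alpha> i + \<beta> i) choose (\<beta> i))
                     * (if (\<lambda>i. \<alpha> i + \<beta> i) \<in> Idx p n d then y (\<lambda>i. \<alpha> i + \<beta> i) else 0))"

definition iter_seq :: "nat \<Rightarrow> enat \<Rightarrow> (nat \<Rightarrow> 'a::ring_1) \<Rightarrow> bool" where
  "iter_seq p e x \<longleftrightarrow> iter_multi p 1 (\<lambda>_. e) (\<lambda>\<alpha>. x (\<alpha> 0))"

definition unitv :: "nat \<Rightarrow> nat \<Rightarrow> nat \<Rightarrow> nat" where
  "unitv i j = (\<lambda>k. if k = i then j else 0)"

definition seqs_commute :: "nat \<Rightarrow> nat \<Rightarrow> (nat \<Rightarrow> enat) \<Rightarrow> (nat \<Rightarrow> nat \<Rightarrow> 'a::ring_1) \<Rightarrow> bool" where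
  "seqs_commute p n d xs \<longleftrightarrow>
     (\<forall>i<n. \<forall>k<n. i \<noteq> k \<longrightarrow> (\<forall>a b. below p (d i) a \<longrightarrow> below p (d k) b \<longrightarrow>
        xs i a * xs k b = xs k b * xs i a))"

definition seq_prod :: "nat \<Rightarrow> (nat \<Rightarrow> nat \<Rightarrow> 'a::ring_1) \<Rightarrow> (nat \<Rightarrow> nat) \<Rightarrow> 'a" where
  "seq_prod n xs \<alpha> = prod_list (map (\<lambda>i. xs i (\<alpha> i)) [0..<n])"

end

theory Submission
  imports Defs
begin

lemma below_mono: "below p d (a + b) \<Longrightarrow> below p d a"
  by (cases d) (auto simp: below_def)

lemma iter_seq_mult:
  assumes "iter_seq p e x" "below p e a" "below p e b"
  shows "x a * x b = of_nat ((a+b) choose b) * (if below p e (a+b) then x (a+b) else 0)"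
proof -
  let ?A = "\<lambda>k::nat. if k = 0 then a else 0"
  let ?B = "\<lambda>k::nat. if k = 0 then b else 0"
  have A: "?A \<in> Idx p 1 (\<lambda>_. e)" and B: "?B \<in> Idx p 1 (\<lambda>_. e)"
    using assms by (auto simp: Idx_def)
  have S: "(\<lambda>i. ?A i + ?B i) \<in> Idx p 1 (\<lambda>_. e) \<longleftrightarrow> below p e (a+b)"
    by (auto simp: Idx_def)
  have H: "\<forall>\<alpha>\<in>Idx p 1 (\<lambda>_. e). \<forall>\<beta>\<in>Idx p 1 (\<lambda>_. e). x (\<alpha> 0) * x (\<beta> 0) = of_nat (\<Prod>i<1. (\<alpha> i + \<beta> i) choose (\<beta> i)) * (if (\<lambda>i. \<alpha> i + \<beta> i) \<in> Idx p 1 (\<lambda>_. e) then x (\<alpha> 0 + \<beta> 0) else 0)"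
    using assms(1) unfolding iter_seq_def iter_multi_def by simp
  have "x (?A 0) * x (?B 0) = of_nat (\<Prod>i<1. (?A i + ?B i) choose (?B i)) *
     (if (\<lambda>i. ?A i + ?B i) \<in> Idx p 1 (\<lambda>_. e) then x (?A 0 + ?B 0) else 0)"
    by (rule H[rule_format, OF A B])
  then show ?thesis using S by simp
qed

lemma comm_prod_list:
  fixes y :: "'a::ring_1"
  assumes "\<forall>z\<in>set zs. y * z = z * y"
  shows "y * prod_list zs = prod_list zs * y"
  using assms
proof (induction zs)
  case Nil then show ?case by simp
next
  case (Cons z zs)
  have yz: "y * z = z * y" using Cons.prems by simp
  have ih: "y * prod_list zs = prod_list zs * y" using Cons by simp
  have "y * (z * prod_list zs) = (y * z) * prod_list zs" by (simp add: mult.assoc)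
  also have "\<dots> = (z * y) * prod_list zs" by (simp only: yz)
  also have "\<dots> = z * (y * prod_list zs)" by (simp add: mult.assoc)
  also have "\<dots> = z * (prod_list zs * y)" by (simp only: ih)
  finally show ?case by (simp add: mult.assoc)
qed

lemma prod_list_merge:
  fixes a b :: "nat \<Rightarrow> 'a::ring_1"
  assumes "\<forall>i<m. \<forall>k<m. i \<noteq> k \<longrightarrow> a i * b k = b k * a i"
  shows "prod_list (map a [0..<m]) * prod_list (map b [0..<m]) = prod_list (map (\<lambda>i. a i * b i) [0..<m])"
  using assms
proof (induction m)
  case 0 then show ?case by simp
next
  case (Suc m)
  have c: "a m * prod_list (map b [0..<m]) = prod_list (map b [0..<m]) * a m"
    by (rule comm_prod_list) (use Suc.prems in auto)
  have "prod_list (map a [0..<Suc m]) * prod_list (map b [0..<Suc m])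
     = prod_list (map a [0..<m]) * (a m * prod_list (map b [0..<m])) * b m"
    by (simp add: mult.assoc)
  also have "\<dots> = (prod_list (map a [0..<m]) * prod_list (map b [0..<m])) * (a m * b m)"
    by (simp only: c) (simp add: mult.assoc)
  also have "\<dots> = prod_list (map (\<lambda>i. a i * b i) [0..<Suc m])"
    using Suc by simp
  finally show ?case .
qed

lemma prod_list_coef:
  fixes y :: "nat \<Rightarrow> 'a::ring_1"
  shows "prod_list (map (\<lambda>i. of_nat (c i) * (if B i then y i else 0)) [0..<m])
       = of_nat (\<Prod>i<m. c i) * (if \<forall>i<m. B i then prod_list (map y [0..<m]) else 0)"
proof (induction m)
  case 0 then show ?case by simp
next
  case (Suc m)
  have "prod_list (map (\<lambda>i. of_nat (c i) * (if B i then y i else 0)) [0..<Suc m])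
     = of_nat (\<Prod>i<m. c i) * (if \<forall>i<m. B i then prod_list (map y [0..<m]) else 0)
       * (of_nat (c m) * (if B m then y m else 0))"
    using Suc by simp
  also have "\<dots> = of_nat (\<Prod>i<m. c i) * of_nat (c m) * ((if \<forall>i<m. B i then prod_list (map y [0..<m]) else 0)
       * (if B m then y m else 0))"
    by (metis (no_types, lifting) mult.assoc mult_of_nat_commute)
  also have "\<dots> = of_nat (\<Prod>i<Suc m. c i) * (if \<forall>i<Suc m. B i then prod_list (map y [0..<Suc m]) else 0)"
    by (auto simp: less_Suc_eq)
  finally show ?case .
qed

lemma below0: "p > 0 \<Longrightarrow> below p d 0"
  by (cases d) (auto simp: below_def)

lemma multi_disj:
  assumes "iter_multi p n d x" "\<alpha> \<in> Idx p n d" "\<beta> \<in> Idx p n d"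
    "\<forall>k<n. ((\<alpha> k + \<beta> k) choose \<beta> k) = 1" "(\<lambda>i. \<alpha> i + \<beta> i) \<in> Idx p n d"
  shows "x \<alpha> * x \<beta> = x (\<lambda>i. \<alpha> i + \<beta> i)"
proof -
  have "x \<alpha> * x \<beta> = of_nat (\<Prod>i<n. (\<alpha> i + \<beta> i) choose (\<beta> i))
                     * (if (\<lambda>i. \<alpha> i + \<beta> i) \<in> Idx p n d then x (\<lambda>i. \<alpha> i + \<beta> i) else 0)"
    using assms(1-3) unfolding iter_multi_def by blast
  moreover have "(\<Prod>i<n. (\<alpha> i + \<beta> i) choose (\<beta> i)) = 1"
    using assms(4) by (intro prod.neutral) auto
  ultimately show ?thesis using assms(5) by simp
qed

lemma unitv_Idx: "i < n \<Longrightarrow> below p (d i) a \<Longrightarrow> p > 0 \<Longrightarrow> unitv i a \<in> Idx p n d"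
  by (auto simp: Idx_def unitv_def below0)

lemma fwd_prod:
  assumes "iter_multi p n d x" "\<alpha> \<in> Idx p n d" "p > 0"
  shows "1 \<le> m \<Longrightarrow> m \<le> n \<Longrightarrow> prod_list (map (\<lambda>i. x (unitv i (\<alpha> i))) [0..<m]) = x (\<lambda>k. if k < m then \<alpha> k else 0)"
proof (induction m)
  case 0 then show ?case by simp
next
  case (Suc m)
  show ?case
  proof (cases "m = 0")
    case True
    have "(\<lambda>a. if a = 0 then \<alpha> 0 else 0) = (\<lambda>k. if k = 0 then \<alpha> k else 0)" by auto
    then show ?thesis using True by (simp add: unitv_def)
  next
    case False
    have mn: "m < n" using Suc by simp
    have IH: "prod_list (map (\<lambda>i. x (unitv i (\<alpha> i))) [0..<m]) = x (\<lambda>k. if k < m then \<alpha> k else 0)"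
      using Suc False by simp
    have r: "\<And>m. (\<lambda>k. if k < m then \<alpha> k else 0) \<in> Idx p n d"
      using assms(2,3) by (auto simp: Idx_def below0)
    have u: "unitv m (\<alpha> m) \<in> Idx p n d"
      using assms(2,3) mn by (intro unitv_Idx) (auto simp: Idx_def)
    have sum: "(\<lambda>i. (if i < m then \<alpha> i else 0) + unitv m (\<alpha> m) i) = (\<lambda>k. if k < Suc m then \<alpha> k else 0)"
      by (auto simp: unitv_def)
    have c: "\<forall>k<n. ((if k < m then \<alpha> k else 0) + unitv m (\<alpha> m) k) choose (unitv m (\<alpha> m) k) = 1"
      by (auto simp: unitv_def)
    have s: "(\<lambda>i. (if i < m then \<alpha> i else 0) + unitv m (\<alpha> m) i) \<in> Idx p n d"
      unfolding sum by (rule r)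
    have "x (\<lambda>k. if k < m then \<alpha> k else 0) * x (unitv m (\<alpha> m)) = x (\<lambda>k. if k < Suc m then \<alpha> k else 0)"
      using multi_disj[OF assms(1) r[of m] u c s] unfolding sum .
    then show ?thesis using IH by simp
  qed
qed

theorem corollary2p5:
  fixes p n :: nat and d :: "nat \<Rightarrow> enat"
  assumes "prime p" and "of_nat p = (0::'a::ring_1)" and "n \<ge> 1"
  shows "(\<forall>x :: (nat \<Rightarrow> nat) \<Rightarrow> 'a. iter_multi p n d x \<longrightarrow>
            (\<forall>i<n. iter_seq p (d i) (\<lambda>j. x (unitv i j)))
          \<and> seqs_commute p n d (\<lambda>i j. x (unitv i j))
          \<and> (\<forall>i<n. x (unitv i 0) = x (\<lambda>_. 0))
          \<and> (\<forall>\<alpha>\<in>Idx p n d. x \<alpha> = seq_prod n (\<lambda>i j. x (unitv i j)) \<alpha>))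
       \<and> (\<forall>xs :: nat \<Rightarrow> nat \<Rightarrow> 'a.
            (\<forall>i<n. iter_seq p (d i) (xs i)) \<and> seqs_commute p n d xs
            \<and> (\<forall>i<n. \<forall>k<n. xs i 0 = xs k 0)
            \<longrightarrow> iter_multi p n d (seq_prod n xs))"
proof (rule conjI; rule allI; rule impI; (intro conjI)?)
  have p0: "p > 0" using assms(1) prime_gt_0_nat by blast
  fix x :: "(nat \<Rightarrow> nat) \<Rightarrow> 'a"
  assume X: "iter_multi p n d x"
  show "\<forall>i<n. iter_seq p (d i) (\<lambda>j. x (unitv i j))"
  proof (intro allI impI)
    fix i assume i: "i < n"
    show "iter_seq p (d i) (\<lambda>j. x (unitv i j))"
    proof -
     { fix \<alpha> \<beta> assume a: "\<alpha> \<in> Idx p 1 (\<lambda>_. d i)" and b: "\<beta> \<in> Idx p 1 (\<lambda>_. d i)"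
      have ua: "unitv i (\<alpha> 0) \<in> Idx p n d" and ub: "unitv i (\<beta> 0) \<in> Idx p n d"
      proof -
        have "below p (d i) (\<alpha> 0)" "below p (d i) (\<beta> 0)" using a b by (auto simp: Idx_def)
        then show "unitv i (\<alpha> 0) \<in> Idx p n d" "unitv i (\<beta> 0) \<in> Idx p n d"
          using unitv_Idx[OF i _ p0] by auto
      qed
      have H: "x (unitv i (\<alpha> 0)) * x (unitv i (\<beta> 0)) = of_nat (\<Prod>k<n. (unitv i (\<alpha> 0) k + unitv i (\<beta> 0) k) choose (unitv i (\<beta> 0) k))
        * (if (\<lambda>k. unitv i (\<alpha> 0) k + unitv i (\<beta> 0) k) \<in> Idx p n d then x (\<lambda>k. unitv i (\<alpha> 0) k + unitv i (\<beta> 0) k) else 0)"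
        using X ua ub unfolding iter_multi_def by blast
      have P: "(\<Prod>k<n. (unitv i (\<alpha> 0) k + unitv i (\<beta> 0) k) choose (unitv i (\<beta> 0) k)) = (\<alpha> 0 + \<beta> 0) choose \<beta> 0"
      proof -
        have "(\<Prod>k<n. (unitv i (\<alpha> 0) k + unitv i (\<beta> 0) k) choose (unitv i (\<beta> 0) k))
            = (\<Prod>k\<in>{i}. (unitv i (\<alpha> 0) k + unitv i (\<beta> 0) k) choose (unitv i (\<beta> 0) k))"
          using i by (intro prod.mono_neutral_right) (auto simp: unitv_def)
        then show ?thesis by (simp add: unitv_def)
      qed
      have E: "(\<lambda>k. unitv i (\<alpha> 0) k + unitv i (\<beta> 0) k) = unitv i (\<alpha> 0 + \<beta> 0)"
        by (auto simp: unitv_def)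
      have M: "unitv i (\<alpha> 0 + \<beta> 0) \<in> Idx p n d \<longleftrightarrow> (\<lambda>k. \<alpha> k + \<beta> k) \<in> Idx p 1 (\<lambda>_. d i)"
        using a b i p0 by (auto simp: Idx_def unitv_def below0)
      have G: "x (unitv i (\<alpha> 0)) * x (unitv i (\<beta> 0)) = of_nat (\<Prod>k<1. (\<alpha> k + \<beta> k) choose (\<beta> k))
          * (if (\<lambda>k. \<alpha> k + \<beta> k) \<in> Idx p 1 (\<lambda>_. d i) then x (unitv i (\<alpha> 0 + \<beta> 0)) else 0)"
        using H unfolding P E M by simp
      note G
    } then show ?thesis unfolding iter_seq_def iter_multi_def by blast
    qed
  qed
  show "seqs_commute p n d (\<lambda>i j. x (unitv i j))"
    unfolding seqs_commute_def
  proof (intro allI impI)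
    fix i k a b assume i: "i < n" and k: "k < n" and ik: "i \<noteq> k" and a: "below p (d i) a" and b: "below p (d k) b"
    have ua: "unitv i a \<in> Idx p n d" and ub: "unitv k b \<in> Idx p n d"
      using a b i k p0 by (auto intro!: unitv_Idx)
    have s: "(\<lambda>j. unitv i a j + unitv k b j) \<in> Idx p n d"
      using a b i k ik p0 by (auto simp: Idx_def unitv_def below0)
    have s': "(\<lambda>j. unitv k b j + unitv i a j) = (\<lambda>j. unitv i a j + unitv k b j)" by auto
    have "x (unitv i a) * x (unitv k b) = x (\<lambda>j. unitv i a j + unitv k b j)"
      using multi_disj[OF X ua ub] s ik by (auto simp: unitv_def)
    moreover have "x (unitv k b) * x (unitv i a) = x (\<lambda>j. unitv i a j + unitv k b j)"
      using multi_disj[OF X ub ua] s ik unfolding s' by (auto simp: unitv_def)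
    ultimately show "x (unitv i a) * x (unitv k b) = x (unitv k b) * x (unitv i a)" by simp
  qed
  show "\<forall>i<n. x (unitv i 0) = x (\<lambda>_. 0)" by (simp add: unitv_def)
  show "\<forall>\<alpha>\<in>Idx p n d. x \<alpha> = seq_prod n (\<lambda>i j. x (unitv i j)) \<alpha>"
  proof
    fix \<alpha> assume a: "\<alpha> \<in> Idx p n d"
    have "seq_prod n (\<lambda>i j. x (unitv i j)) \<alpha> = x (\<lambda>k. if k < n then \<alpha> k else 0)"
      unfolding seq_prod_def using fwd_prod[OF X a p0] assms(3) by simp
    moreover have "(\<lambda>k. if k < n then \<alpha> k else 0) = \<alpha>" using a by (auto simp: Idx_def)
    ultimately show "x \<alpha> = seq_prod n (\<lambda>i j. x (unitv i j)) \<alpha>" by simp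
  qed
next
  fix xs :: "nat \<Rightarrow> nat \<Rightarrow> 'a"
  assume H: "(\<forall>i<n. iter_seq p (d i) (xs i)) \<and> seqs_commute p n d xs \<and> (\<forall>i<n. \<forall>k<n. xs i 0 = xs k 0)"
  show "iter_multi p n d (seq_prod n xs)"
    unfolding iter_multi_def
  proof (intro ballI)
    fix \<alpha> \<beta> assume a: "\<alpha> \<in> Idx p n d" and b: "\<beta> \<in> Idx p n d"
    have ba: "\<forall>i<n. below p (d i) (\<alpha> i)" and bb: "\<forall>i<n. below p (d i) (\<beta> i)"
      using a b by (auto simp: Idx_def)
    have "seq_prod n xs \<alpha> * seq_prod n xs \<beta> = prod_list (map (\<lambda>i. xs i (\<alpha> i) * xs i (\<beta> i)) [0..<n])"
      unfolding seq_prod_def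
      by (rule prod_list_merge) (use H ba bb in \<open>auto simp: seqs_commute_def\<close>)
    also have "\<dots> = prod_list (map (\<lambda>i. of_nat ((\<alpha> i + \<beta> i) choose \<beta> i) * (if below p (d i) (\<alpha> i + \<beta> i) then xs i (\<alpha> i + \<beta> i) else 0)) [0..<n])"
      by (rule arg_cong[where f=prod_list], rule map_cong[OF refl])
         (use H ba bb iter_seq_mult in \<open>force\<close>)
    also have "\<dots> = of_nat (\<Prod>i<n. (\<alpha> i + \<beta> i) choose \<beta> i) * (if \<forall>i<n. below p (d i) (\<alpha> i + \<beta> i) then prod_list (map (\<lambda>i. xs i (\<alpha> i + \<beta> i)) [0..<n]) else 0)"
      by (rule prod_list_coef)
    also have "\<dots> = of_nat (\<Prod>i<n. (\<alpha> i + \<beta> i) choose \<beta> i) * (if (\<lambda>i. \<alpha> i + \<beta> i) \<in> Idx p n d then seq_prod n xs (\<lambda>i. \<alpha> i + \<beta> i) else 0)"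
      using a b by (auto simp: Idx_def seq_prod_def)
    finally show "seq_prod n xs \<alpha> * seq_prod n xs \<beta> = of_nat (\<Prod>i<n. (\<alpha> i + \<beta> i) choose \<beta> i) * (if (\<lambda>i. \<alpha> i + \<beta> i) \<in> Idx p n d then seq_prod n xs (\<lambda>i. \<alpha> i + \<beta> i) else 0)" .
  qed
qed

end
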